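(* Let $p$ be an odd prime such that $\mathbb{F}_p$ contains a primitive cube root of unity $\omega$, and for integers $0\le r_1,r_2,r_3\le p-1$ let $\mathcal{C}_{(r_1,r_2,r_3)}$ be the cyclic code of length $3p$ over $\mathbb{F}_p$ generated by $(x-1)^{r_1}(x-\omega)^{r_2}(x-\omega^2)^{r_3}$, and let $d_p$ denote minimum symbol-pair distance. Then: (1) $d_p(\mathcal{C}_{(0,r_2,0)})=4$ whenever $2\le r_2\le p-1$; and, for exponents satisfying $p-1\ge r_1\ge r_2\ge r_3\ge 0$: (2) $d_p(\mathcal{C}_{(2,1,0)})=5$; (3) $d_p(\mathcal{C}_{(r_1,r_2,0)})=6$ whenever $r_1+r_2\ge 4$ and $r_2\ge 1$; (4) $d_p(\mathcal{C}_{(2,r_2,r_3)})=6$ whenever $2\le r_2+r_3\le 4$.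
   Context: For $\mathbf{x}=(x_0,\dots,x_{n-1})\in\mathbb{F}_p^n$, the symbol-pair distance is $D_p(\mathbf{x},\mathbf{y})=|\{i:(x_i,x_{i+1})\neq(y_i,y_{i+1})\}|$ (indices modulo $n$); the minimum symbol-pair distance of a code is the minimum of $D_p$ over distinct codewords. The cyclic code generated by $g(x)\mid x^n-1$ is the ideal $\langle g(x)\rangle$ in $\mathbb{F}_p[x]/\langle x^n-1\rangle$. *)

theory Defs
  imports "HOL-Computational_Algebra.Polynomial"
begin

text \<open>A word of length n over a field is represented by a polynomial of degree < n;
  its i-th symbol is coeff c i (0 \<le> i < n).\<close>

definition xn_minus_1 :: "nat \<Rightarrow> 'a::comm_ring_1 poly" where
  "xn_minus_1 n = monom 1 n - 1"

text \<open>The cyclic code generated by g: the ideal generated by g in F[x]/(x^n - 1),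
  with residues represented by their canonical representatives of degree < n.\<close>
definition cyclic_code :: "nat \<Rightarrow> 'a::field poly \<Rightarrow> 'a poly set" where
  "cyclic_code n g = {(f * g) mod xn_minus_1 n | f. True}"

definition pair_dist :: "nat \<Rightarrow> 'a::zero poly \<Rightarrow> 'a poly \<Rightarrow> nat" where
  "pair_dist n x y = card {i. i < n \<and>
      (coeff x i, coeff x ((i + 1) mod n)) \<noteq> (coeff y i, coeff y ((i + 1) mod n))}"

definition min_pair_dist :: "nat \<Rightarrow> 'a::zero poly set \<Rightarrow> nat" where
  "min_pair_dist n C = Min {pair_dist n x y | x y. x \<in> C \<and> y \<in> C \<and> x \<noteq> y}"

definition gen3 :: "'a::comm_ring_1 \<Rightarrow> nat \<Rightarrow> nat \<Rightarrow> nat \<Rightarrow> 'a poly" where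
  "gen3 \<omega> r1 r2 r3 = [:-1, 1:] ^ r1 * [:-\<omega>, 1:] ^ r2 * [:-(\<omega>^2), 1:] ^ r3"

end

theory Submission
  imports Defs "HOL-Number_Theory.Residues"
begin


hide_const (open) UnivPoly.monom UnivPoly.coeff Module.module.smult

definition pw :: "nat \<Rightarrow> 'b::zero poly \<Rightarrow> nat" where
  "pw n c = card {i. i < n \<and> (coeff c i \<noteq> 0 \<or> coeff c ((i + 1) mod n) \<noteq> 0)}"

lemma pd_pw: "pair_dist n x y = pw n (x - (y::'b::ab_group_add poly))"
  unfolding pair_dist_def pw_def by (rule arg_cong[where f=card]) auto

lemma pw_le: "pw n c \<le> n"
proof -
  have "{i. i < n \<and> (coeff c i \<noteq> 0 \<or> coeff c ((i + 1) mod n) \<noteq> 0)} \<subseteq> {..<n}" by auto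
  then show ?thesis unfolding pw_def using card_mono[of "{..<n}"] by fastforce
qed

lemma xn_deg: "n > 0 \<Longrightarrow> degree (xn_minus_1 n :: 'b::comm_ring_1 poly) = n"
proof -
  assume n: "n > 0"
  have "xn_minus_1 n = monom (1::'b) n + (- 1)" by (simp add: xn_minus_1_def)
  also have "degree \<dots> = n" using n by (subst degree_add_eq_left) (auto simp: degree_monom_eq)
  finally show ?thesis .
qed

lemma code_iff:
  fixes g :: "'b::field poly"
  assumes gd: "g dvd xn_minus_1 n" and n: "n > 0"
  shows "c \<in> cyclic_code n g \<longleftrightarrow> g dvd c \<and> (\<forall>i\<ge>n. coeff c i = 0)"
proof -
  let ?m = "xn_minus_1 n :: 'b poly"
  have dm: "degree ?m = n" using xn_deg[OF n] .
  then have m0: "?m \<noteq> 0" using n by auto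
  show ?thesis
  proof
    assume "c \<in> cyclic_code n g"
    then obtain f where c: "c = (f * g) mod ?m" unfolding cyclic_code_def by auto
    have "g dvd c" unfolding c by (rule dvd_mod) (auto simp: gd)
    moreover have "\<forall>i\<ge>n. coeff c i = 0"
    proof (intro allI impI)
      fix i assume i: "n \<le> i"
      show "coeff c i = 0"
      proof (cases "c = 0")
        case False
        then have "degree c < n" using degree_mod_less[OF m0, of "f*g"] c dm by auto
        then show ?thesis using i by (intro coeff_eq_0) auto
      qed simp
    qed
    ultimately show "g dvd c \<and> (\<forall>i\<ge>n. coeff c i = 0)" by blast
  next
    assume h: "g dvd c \<and> (\<forall>i\<ge>n. coeff c i = 0)"
    then obtain f where f: "c = g * f" by blast
    have "c mod ?m = c"
    proof (cases "c = 0")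
      case False
      have "degree c < n"
      proof (rule ccontr)
        assume "\<not> degree c < n"
        then have "coeff c (degree c) = 0" using h by auto
        then show False using False by simp
      qed
      then show ?thesis using dm by (intro mod_poly_less) auto
    qed simp
    then have "c = (f * g) mod ?m" using f by (simp add: mult.commute)
    then show "c \<in> cyclic_code n g" unfolding cyclic_code_def by blast
  qed
qed

lemma min_lemma:
  fixes C :: "'b::ab_group_add poly set"
  assumes sub: "\<And>x y. x \<in> C \<Longrightarrow> y \<in> C \<Longrightarrow> x - y \<in> C"
    and w: "w \<in> C" "w \<noteq> 0" "pw n w = d" and z: "0 \<in> C"
    and lb: "\<And>c. c \<in> C \<Longrightarrow> c \<noteq> 0 \<Longrightarrow> d \<le> pw n c"
  shows "min_pair_dist n C = d"
  unfolding min_pair_dist_def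
proof (rule Min_eqI)
  show "finite {pair_dist n x y |x y. x \<in> C \<and> y \<in> C \<and> x \<noteq> y}"
    by (rule finite_subset[of _ "{..n}"]) (auto simp: pd_pw pw_le)
  have "d = pair_dist n w 0" using w by (simp add: pd_pw)
  then show "d \<in> {pair_dist n x y |x y. x \<in> C \<and> y \<in> C \<and> x \<noteq> y}"
    using w z by blast
  fix s assume "s \<in> {pair_dist n x y |x y. x \<in> C \<and> y \<in> C \<and> x \<noteq> y}"
  then obtain x y where "x \<in> C" "y \<in> C" "x \<noteq> y" "s = pw n (x - y)" by (auto simp: pd_pw)
  then show "d \<le> s" using lb sub by auto
qed

lemma code_sub: "g dvd xn_minus_1 n \<Longrightarrow> n > 0 \<Longrightarrow> x \<in> cyclic_code n g \<Longrightarrow> y \<in> cyclic_code n g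
  \<Longrightarrow> x - y \<in> cyclic_code n (g :: 'b::field poly)"
  by (simp add: code_iff dvd_diff)

lemma code_0: "g dvd xn_minus_1 n \<Longrightarrow> n > 0 \<Longrightarrow> 0 \<in> cyclic_code n (g :: 'b::field poly)"
  by (simp add: code_iff)

lemma rot:
  fixes g :: "'b::field poly"
  assumes gd: "g dvd xn_minus_1 n" and n: "n > 0" and c: "c \<in> cyclic_code n g" and t: "t \<le> n"
  shows "\<exists>R \<in> cyclic_code n g. \<forall>i<n. coeff R i = coeff c ((i + t) mod n)"
proof -
  have cc: "g dvd c" "\<forall>i\<ge>n. coeff c i = 0" using c code_iff[OF gd n] by auto
  define s where "s = n - t"
  define q where "q = monom 1 s * c"
  define R where "R = poly_cutoff n q + poly_shift n q"
  have qs: "q = poly_cutoff n q + monom 1 n * poly_shift n q"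
    by (rule poly_eqI) (auto simp: coeff_poly_cutoff coeff_monom_mult coeff_poly_shift)
  have "R = q - xn_minus_1 n * poly_shift n q"
    unfolding R_def xn_minus_1_def by (subst (2) qs) (simp add: algebra_simps)
  moreover have "g dvd q" unfolding q_def using cc by simp
  ultimately have gR: "g dvd R" using gd by (simp add: dvd_diff)
  have cq: "coeff q k = (if k < s then 0 else coeff c (k - s))" for k
    unfolding q_def by (simp add: coeff_monom_mult)
  have hi: "\<forall>i\<ge>n. coeff R i = 0"
    using cc(2) by (auto simp: R_def coeff_poly_cutoff coeff_poly_shift cq s_def)
  have "R \<in> cyclic_code n g" using code_iff[OF gd n] gR hi by auto
  moreover have "\<forall>i<n. coeff R i = coeff c ((i + t) mod n)"
  proof (intro allI impI)
    fix i assume i: "i < n"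
    show "coeff R i = coeff c ((i + t) mod n)"
    proof (cases "i < s")
      case True
      then have "i + t < n" using s_def t by auto
      then show ?thesis using True i
        by (auto simp: R_def coeff_poly_cutoff coeff_poly_shift cq s_def)
    next
      case False
      have "i + t = (i - s) + n" using False s_def t by auto
      then have "(i + t) mod n = i - s" using i by simp
      then show ?thesis using False i cc(2)
        by (auto simp: R_def coeff_poly_cutoff coeff_poly_shift cq s_def)
    qed
  qed
  ultimately show ?thesis by blast
qed


lemma pw_rot_le:
  assumes h: "\<forall>i<n. coeff R i = coeff c ((i + t) mod n)" and n: "n > 0"
  shows "pw n R \<le> pw n c"
proof -
  let ?A = "{i. i < n \<and> (coeff R i \<noteq> 0 \<or> coeff R ((i + 1) mod n) \<noteq> 0)}"
  let ?B = "{i. i < n \<and> (coeff c i \<noteq> 0 \<or> coeff c ((i + 1) mod n) \<noteq> 0)}"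
  let ?f = "\<lambda>i. (i + t) mod n"
  have "inj_on ?f ?A"
  proof (rule inj_onI)
    fix i j assume "i \<in> ?A" "j \<in> ?A" "?f i = ?f j"
    then have "[i + t = j + t] (mod n)" "i < n" "j < n" by (auto simp: cong_def)
    then have "[i = j] (mod n)" "i < n" "j < n" using cong_add_rcancel_nat by blast+
    then show "i = j" by (simp add: cong_def)
  qed
  moreover have "?f ` ?A \<subseteq> ?B"
  proof
    fix x assume "x \<in> ?f ` ?A"
    then obtain i where i: "i \<in> ?A" "x = ?f i" by blast
    have e: "((i + 1) mod n + t) mod n = (x + 1) mod n" using i(2) by (simp add: mod_simps ac_simps)
    show "x \<in> ?B" using i h e n by auto
  qed
  moreover have "finite ?B" by simp
  ultimately show ?thesis unfolding pw_def by (rule card_inj_on_le)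
qed

lemma start:
  fixes c :: "'b::zero poly"
  assumes c: "c \<noteq> 0" and hz: "\<forall>i\<ge>n. coeff c i = 0" and u: "u < n" "coeff c u = 0"
  shows "\<exists>t<n. coeff c t \<noteq> 0 \<and> coeff c ((n - 1 + t) mod n) = 0"
proof -
  obtain v where v: "coeff c v \<noteq> 0" using c by (metis leading_coeff_0_iff)
  have vn: "v < n" using v hz by (meson not_le)
  define K where "K = {k. k < n \<and> coeff c ((u + k) mod n) \<noteq> 0}"
  have "(u + (v + n - u) mod n) mod n = v" using u vn by (simp add: mod_simps)
  then have "(v + n - u) mod n \<in> K" unfolding K_def using v u by auto
  then have ne: "K \<noteq> {}" by blast
  have fin: "finite K" unfolding K_def by simp
  define k where "k = Min K"
  have kK: "k \<in> K" using Min_in[OF fin ne] k_def by simp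
  have k0: "k \<noteq> 0"
  proof
    assume "k = 0"
    then show False using kK u unfolding K_def by simp
  qed
  have km: "k - 1 \<notin> K" using Min_le[OF fin] k0 k_def by (metis diff_less less_le_not_le not_gr_zero zero_less_one)
  define t where "t = (u + k) mod n"
  have "(n - 1 + t) mod n = (u + (k - 1)) mod n"
  proof -
    have "(n - 1 + t) mod n = (n - 1 + (u + k)) mod n" unfolding t_def by (simp add: mod_simps)
    also have "n - 1 + (u + k) = (u + (k - 1)) + n" using k0 u by auto
    finally show ?thesis by simp
  qed
  moreover have "k - 1 < n" using kK unfolding K_def by auto
  ultimately have "coeff c ((n - 1 + t) mod n) = 0" using km unfolding K_def by auto
  moreover have "coeff c t \<noteq> 0" using kK unfolding K_def t_def by auto
  moreover have "t < n" unfolding t_def using u by auto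
  ultimately show ?thesis by blast
qed

lemma len_le_card: "distinct xs \<Longrightarrow> set xs \<subseteq> P \<Longrightarrow> finite P \<Longrightarrow> length xs \<le> card P"
  by (metis card_mono distinct_card)

context
  fixes R :: "'b::zero poly" and n :: nat
  assumes hz: "\<forall>i\<ge>n. coeff R i = 0" and h0: "coeff R 0 \<noteq> 0" and hn: "coeff R (n-1) = 0" and n2: "n \<ge> 2"
begin

lemma core_deg: "degree R < n - 1"
proof -
  have R0: "R \<noteq> 0" using h0 by auto
  then have l: "coeff R (degree R) \<noteq> 0" by simp
  then have "degree R < n" using hz by (meson not_le)
  moreover have "degree R \<noteq> n - 1" using l hn by metis
  ultimately show ?thesis by auto
qed

private abbreviation "PP \<equiv> {i. i < n \<and> (coeff R i \<noteq> 0 \<or> coeff R ((i + 1) mod n) \<noteq> 0)}"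

lemma inP1: "i < n \<Longrightarrow> coeff R i \<noteq> 0 \<Longrightarrow> i \<in> PP" by auto
lemma inP2: "1 \<le> i \<Longrightarrow> i < n \<Longrightarrow> coeff R i \<noteq> 0 \<Longrightarrow> i - 1 \<in> PP" by auto
lemma inPn: "n - 1 \<in> PP" using h0 n2 by auto
lemma inPD: "1 \<le> degree R \<Longrightarrow> degree R - 1 \<in> PP" "degree R \<in> PP"
proof -
  have l: "coeff R (degree R) \<noteq> 0" using h0 by auto
  show "1 \<le> degree R \<Longrightarrow> degree R - 1 \<in> PP" using inP2 l core_deg by auto
  show "degree R \<in> PP" using inP1 l core_deg by auto
qed
lemma inP0: "0 \<in> PP" using h0 n2 by auto

lemma finP: "finite PP" by simp

lemma lenP: "distinct xs \<Longrightarrow> set xs \<subseteq> PP \<Longrightarrow> length xs \<le> pw n R"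
  unfolding pw_def by (rule len_le_card) auto

lemma core_a: "2 \<le> degree R \<Longrightarrow> 4 \<le> pw n R"
proof -
  assume d: "2 \<le> degree R"
  have "set [n-1, 0, degree R - 1, degree R] \<subseteq> PP" using d inPn inP0 inPD by simp
  moreover have "distinct [n-1, 0, degree R - 1, degree R]" using core_deg d by auto
  ultimately have "length [n-1, 0, degree R - 1, degree R] \<le> pw n R" by (rule lenP[rotated])
  then show ?thesis by simp
qed

lemma core_b: "3 \<le> degree R \<Longrightarrow> pw n R \<le> 4 \<Longrightarrow> 0 < s \<Longrightarrow> s < degree R \<Longrightarrow> coeff R s = 0"
proof (rule ccontr)
  assume d: "3 \<le> degree R" and pw: "pw n R \<le> 4" and s: "0 < s" "s < degree R" and cs: "coeff R s \<noteq> 0"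
  have sn: "s < n" using s core_deg by auto
  have m1: "s \<in> PP" by (rule inP1[OF sn cs])
  have m2: "s - 1 \<in> PP" using inP2[OF _ sn cs] s by simp
  show False
  proof (cases "s = degree R - 1")
    case False
    have "set [n-1, 0, s, degree R - 1, degree R] \<subseteq> PP" using d inPn inP0 inPD m1 by simp
    moreover have "distinct [n-1, 0, s, degree R - 1, degree R]" using core_deg d s False by auto
    ultimately have "length [n-1, 0, s, degree R - 1, degree R] \<le> pw n R" by (rule lenP[rotated])
    then show False using pw by simp
  next
    case True
    have "set [n-1, 0, s - 1, degree R - 1, degree R] \<subseteq> PP" using d inPn inP0 inPD m2 by simp
    moreover have "distinct [n-1, 0, s - 1, degree R - 1, degree R]" using core_deg d s True by auto
    ultimately have "length [n-1, 0, s - 1, degree R - 1, degree R] \<le> pw n R" by (rule lenP[rotated])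
    then show False using pw by simp
  qed
qed

lemma core_c1: "4 \<le> degree R \<Longrightarrow> pw n R \<le> 5 \<Longrightarrow> 1 < s \<Longrightarrow> s < degree R - 1 \<Longrightarrow> coeff R s = 0"
proof (rule ccontr)
  assume d: "4 \<le> degree R" and pw: "pw n R \<le> 5" and s: "1 < s" "s < degree R - 1" and cs: "coeff R s \<noteq> 0"
  have sn: "s < n" using s core_deg by auto
  have m1: "s \<in> PP" by (rule inP1[OF sn cs])
  have m2: "s - 1 \<in> PP" using inP2[OF _ sn cs] s by simp
  have "set [n-1, 0, s - 1, s, degree R - 1, degree R] \<subseteq> PP" using d inPn inP0 inPD m1 m2 by simp
  moreover have "distinct [n-1, 0, s - 1, s, degree R - 1, degree R]" using core_deg d s by auto
  ultimately have "length [n-1, 0, s - 1, s, degree R - 1, degree R] \<le> pw n R" by (rule lenP[rotated])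
  then show False using pw by simp
qed

lemma core_c2: "4 \<le> degree R \<Longrightarrow> pw n R \<le> 5 \<Longrightarrow> coeff R 1 = 0 \<or> coeff R (degree R - 1) = 0"
proof (rule ccontr)
  assume d: "4 \<le> degree R" and pw: "pw n R \<le> 5" and cs: "\<not> (coeff R 1 = 0 \<or> coeff R (degree R - 1) = 0)"
  have sn: "degree R - 1 < n" "1 < n" using core_deg d by auto
  have m1: "1 \<in> PP" using inP1[OF sn(2)] cs by simp
  have m2: "degree R - 1 - 1 \<in> PP" using inP2[OF _ sn(1)] cs d by simp
  have "set [n-1, 0, 1, degree R - 1 - 1, degree R - 1, degree R] \<subseteq> PP" using d inPn inP0 inPD m1 m2 by simp
  moreover have "distinct [n-1, 0, 1, degree R - 1 - 1, degree R - 1, degree R]" using core_deg d by auto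
  ultimately have "length [n-1, 0, 1, degree R - 1 - 1, degree R - 1, degree R] \<le> pw n R" by (rule lenP[rotated])
  then show False using pw by simp
qed

end

lemma mod_pred: "i < (n::nat) \<Longrightarrow> ((i + 1) mod n + n - 1) mod n = i"
proof (cases "i + 1 < n")
  case True
  then have e1: "(i + 1) mod n = i + 1" by (rule mod_less)
  have e2: "i + 1 + n - 1 = i + n" by simp
  assume i: "i < n"
  have e3: "(i + n) mod n = i" using i by simp
  show ?thesis by (simp only: e1 e2 e3)
next
  case False
  assume i: "i < n"
  then have "i + 1 = n" using False by simp
  then have e1: "(i + 1) mod n = 0" by simp
  have e2: "0 + n - 1 = i" using \<open>i + 1 = n\<close> by simp
  have e3: "i mod n = i" using i by simp
  show ?thesis by (simp only: e1 e2 e3)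
qed

lemma pw_upper:
  assumes h: "\<forall>i<n. coeff w i \<noteq> 0 \<longrightarrow> i \<in> A" and n: "n > 0" and fin: "finite A"
  shows "pw n w \<le> card (A \<union> (\<lambda>a. (a + n - 1) mod n) ` A)"
proof -
  have sub: "{i. i < n \<and> (coeff w i \<noteq> 0 \<or> coeff w ((i + 1) mod n) \<noteq> 0)} \<subseteq> A \<union> (\<lambda>a. (a + n - 1) mod n) ` A"
  proof
    fix i assume i: "i \<in> {i. i < n \<and> (coeff w i \<noteq> 0 \<or> coeff w ((i + 1) mod n) \<noteq> 0)}"
    show "i \<in> A \<union> (\<lambda>a. (a + n - 1) mod n) ` A"
    proof (cases "coeff w i \<noteq> 0")
      case True
      have "i < n" using i by simp
      then have "i \<in> A" using h True by blast
      then show ?thesis by (rule UnI1)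
    next
      case False
      have l1: "(i + 1) mod n < n" using n by simp
      have l2: "coeff w ((i + 1) mod n) \<noteq> 0" using i False by simp
      have a: "(i + 1) mod n \<in> A" using h l1 l2 by blast
      have "i < n" using i by simp
      then have e: "((i + 1) mod n + n - 1) mod n = i" by (rule mod_pred)
      have "i \<in> (\<lambda>a. (a + n - 1) mod n) ` A" by (rule image_eqI[where f="\<lambda>a. (a + n - 1) mod n", OF e[symmetric] a])
      then show ?thesis by (rule UnI2)
    qed
  qed
  have fB: "finite (A \<union> (\<lambda>a. (a + n - 1) mod n) ` A)" using fin by simp
  show ?thesis unfolding pw_def by (rule card_mono[OF fB sub])
qed

lemma frob:
  fixes a b :: "'b::comm_ring_1"
  assumes "prime p" "of_nat p = (0::'b)"
  shows "(a + b) ^ p = a ^ p + b ^ p"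
proof -
  have p0: "p \<noteq> 0" using assms(1) by auto
  have "(a + b) ^ p = (\<Sum>k\<le>p. of_nat (p choose k) * a ^ k * b ^ (p - k))"
    by (rule binomial_ring)
  also have "\<dots> = (\<Sum>k\<in>{0,p}. of_nat (p choose k) * a ^ k * b ^ (p - k))"
  proof (rule sum.mono_neutral_right)
    show "\<forall>k\<in>{..p} - {0, p}. of_nat (p choose k) * a ^ k * b ^ (p - k) = 0"
    proof
      fix k assume k: "k \<in> {..p} - {0, p}"
      then have "p dvd (p choose k)" using dvd_choose_prime[of k p] assms(1) by auto
      then obtain m where "p choose k = p * m" by blast
      then have "of_nat (p choose k) = (of_nat p * of_nat m :: 'b)" by simp
      then show "of_nat (p choose k) * a ^ k * b ^ (p - k) = 0" using assms(2) by simp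
    qed
  qed auto
  also have "\<dots> = a ^ p + b ^ p" using p0 by (simp add: add.commute)
  finally show ?thesis .
qed

lemma m3: "(monom 1 3 - 1 :: 'a::comm_ring_1 poly) = [:-1,0,0,1:]"
proof (rule poly_eqI)
  fix n show "coeff (monom 1 3 - 1 :: 'a poly) n = coeff [:-1,0,0,1:] n"
    by (cases "n = 0"; cases "n = 1"; cases "n = 2"; cases "n = 3") (auto simp: coeff_pCons coeff_monom split: nat.splits)
qed

locale cc =
  fixes \<omega> :: "'a::{field,finite}" and p :: nat
  assumes pr: "prime p" and od: "odd p" and cardp: "card (UNIV :: 'a set) = p"
    and w3: "\<omega> ^ 3 = 1" and w1: "\<omega> \<noteq> 1"
begin

lemma char: "CHAR('a) = p"
proof -
  have "CHAR('a) dvd p" using CHAR_dvd_CARD[where 'a='a] cardp by simp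
  then show ?thesis using pr CHAR_not_1[where 'a='a] by (auto simp: prime_nat_iff)
qed

lemma of_nat_0_iff: "(of_nat m :: 'a) = 0 \<longleftrightarrow> p dvd m"
  using of_nat_eq_0_iff_char_dvd[where 'a='a] char by simp

lemma p0: "of_nat p = (0::'a)" by (simp add: of_nat_0_iff)

lemma p0poly: "of_nat p = (0::'a poly)" by (simp add: of_nat_poly p0)

lemma wsum: "1 + \<omega> + \<omega>^2 = 0"
proof -
  have "(\<omega> - 1) * (1 + \<omega> + \<omega>^2) = \<omega>^3 - 1" by (simp add: algebra_simps power2_eq_square power3_eq_cube)
  then show ?thesis using w3 w1 by simp
qed

lemma w2: "\<omega>^2 \<noteq> 1"
proof
  assume "\<omega>^2 = 1"
  then have "\<omega>^3 = \<omega>" by (simp add: power3_eq_cube power2_eq_square mult.assoc[symmetric])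
  then show False using w3 w1 by simp
qed

lemma three: "(3::'a) \<noteq> 0"
proof
  assume h: "(3::'a) = 0"
  have a: "3 * \<omega>^2 = 0" "3 * \<omega> = 0" by (metis h mult_zero_left)+
  have "(\<omega> - 1)^3 = \<omega>^3 - 1 - 3 * \<omega>^2 + 3 * \<omega>"
    by (simp add: algebra_simps power2_eq_square power3_eq_cube)
  also have "\<dots> = 0" by (simp only: a w3) simp
  finally show False using w1 by simp
qed

lemma p3: "p \<noteq> 3"
proof
  assume "p = 3"
  then have "(of_nat 3 :: 'a) = 0" using p0 by simp
  then show False using three by simp
qed

lemma wpow: "\<omega> ^ m = \<omega> ^ (m mod 3)"
proof -
  have "\<omega> ^ m = \<omega> ^ (3 * (m div 3) + m mod 3)" by simp
  also have "\<dots> = (\<omega>^3)^(m div 3) * \<omega> ^ (m mod 3)" by (simp only: power_add power_mult)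
  finally show ?thesis using w3 by simp
qed

lemma wpow1: "\<omega> ^ m = 1 \<longleftrightarrow> 3 dvd m"
proof -
  have "m mod 3 = 0 \<or> m mod 3 = 1 \<or> m mod 3 = 2" by auto
  then show ?thesis using wpow[of m] w1 w2 by (auto simp: dvd_eq_mod_eq_0)
qed

lemma pmul3: "[:a,b,1:] * [:c,1:] = [:a*c, a + b*c, b + c, 1::'b::comm_ring_1:]"
  by (simp add: algebra_simps)

lemma cube: "[:-1,1:] * [:-\<omega>,1:] * [:-(\<omega>^2),1:] = (monom 1 3 - 1 :: 'a poly)"
proof -
  have e: "\<omega>^2 = - 1 - \<omega>" using wsum by (simp add: algebra_simps eq_neg_iff_add_eq_0)
  have h1: "[:-1,1:] * [:-\<omega>,1:] = [:\<omega>, -1-\<omega>, 1:]" by simp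
  have c0: "\<omega> * -(\<omega>^2) = -1" using w3 by (simp add: power3_eq_cube power2_eq_square mult.assoc)
  have c1: "\<omega> + (-1-\<omega>) * -(\<omega>^2) = 0" using w3 e
    by (simp add: algebra_simps power3_eq_cube power2_eq_square)
  have c2: "(-1-\<omega>) + -(\<omega>^2) = 0" using e by simp
  have "[:-1,1:] * [:-\<omega>,1:] * [:-(\<omega>^2),1:] = [:\<omega>, -1-\<omega>, 1:] * [:-(\<omega>^2),1:]" by (simp only: h1)
  also have "\<dots> = [:\<omega> * -(\<omega>^2), \<omega> + (-1-\<omega>) * -(\<omega>^2), (-1-\<omega>) + -(\<omega>^2), 1:]" by (rule pmul3)
  also have "\<dots> = [:-1,0,0,1:]" by (simp only: c0 c1 c2)
  also have "\<dots> = monom 1 3 - 1" by (simp only: m3)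
  finally show ?thesis .
qed

lemma lin_frob: "[:-a,1:]^p = (monom 1 p - [:a^p:] :: 'a poly)"
proof -
  have c: "[:c:]^k = [:c^k:]" for c :: 'a and k by (induction k) auto
  have "[:-a,1:] = monom 1 1 + [:-a:]" by (simp add: monom_altdef)
  then have "[:-a,1:]^p = (monom 1 1)^p + [:-a:]^p" using frob[OF pr p0poly] by simp
  also have "\<dots> = monom 1 p - [:a^p:]" using od by (simp add: monom_power c)
  finally show ?thesis .
qed

lemma xn_frob: "xn_minus_1 (3*p) = ((monom 1 3 - 1)^p :: 'a poly)"
proof -
  have "(monom 1 3 - 1 :: 'a poly)^p = (monom 1 3 + (-1))^p" by simp
  also have "\<dots> = (monom 1 3)^p + (-1)^p" using frob[OF pr p0poly] by blast
  also have "\<dots> = monom 1 (3*p) - 1" using od by (simp add: monom_power mult.commute)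
  finally show ?thesis by (simp add: xn_minus_1_def)
qed

lemma gen_dvd: "r1 \<le> p \<Longrightarrow> r2 \<le> p \<Longrightarrow> r3 \<le> p \<Longrightarrow> gen3 \<omega> r1 r2 r3 dvd xn_minus_1 (3*p)"
proof -
  assume r: "r1 \<le> p" "r2 \<le> p" "r3 \<le> p"
  have "xn_minus_1 (3*p) = [:-1,1:]^p * [:-\<omega>,1:]^p * [:-(\<omega>^2),1:]^p"
    unfolding xn_frob cube[symmetric] by (simp only: power_mult_distrib)
  then show ?thesis unfolding gen3_def using r
    by (simp add: mult_dvd_mono le_imp_power_dvd)
qed

end


lemma dvd_pderiv:
  fixes a :: "'b::field"
  assumes "[:-a,1:]^(Suc m) dvd f" shows "[:-a,1:]^m dvd pderiv f"
proof -
  obtain q where f: "f = [:-a,1:]^(Suc m) * q" using assms by blast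
  have "pderiv f = [:-a,1:]^m * (smult (of_nat (Suc m)) (pderiv [:-a,1:]) * q + [:-a,1:] * pderiv q)"
    unfolding f pderiv_mult pderiv_power_Suc by (simp only: power_Suc2 algebra_simps mult_smult_left mult_smult_right)
  then show ?thesis by simp
qed

lemma d2:
  fixes a :: "'b::field"
  assumes "[:-a,1:]^2 dvd f" shows "poly f a = 0" "poly (pderiv f) a = 0"
proof -
  have "[:-a,1:] dvd f" using assms power_le_dvd[of "[:-a,1:]" 2 f 1] by simp
  then show "poly f a = 0" by (simp add: poly_eq_0_iff_dvd)
  have "[:-a,1:]^1 dvd pderiv f" using assms dvd_pderiv[of a 1 f] by (simp add: numeral_2_eq_2)
  then show "poly (pderiv f) a = 0" by (simp add: poly_eq_0_iff_dvd)
qed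

lemma d3:
  fixes a :: "'b::field"
  assumes "[:-a,1:]^3 dvd f" shows "poly (pderiv (pderiv f)) a = 0"
proof -
  have "[:-a,1:]^2 dvd pderiv f" using assms dvd_pderiv[of a 2 f] by (simp add: numeral_3_eq_3 numeral_2_eq_2)
  then show ?thesis using d2 by blast
qed

lemma ev3:
  fixes A B C x :: "'b::field"
  shows "poly (monom A 0 + monom B j + monom C D) x = A + B * x^j + C * x^D"
    "poly (pderiv (monom A 0 + monom B j + monom C D)) x = of_nat j * B * x^(j-1) + of_nat D * C * x^(D-1)"
    "poly (pderiv (pderiv (monom A 0 + monom B j + monom C D))) x =
       of_nat (j-1) * (of_nat j * B) * x^(j-1-1) + of_nat (D-1) * (of_nat D * C) * x^(D-1-1)"
  by (simp_all add: poly_monom pderiv_add pderiv_monom)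

context cc begin

lemma w0: "\<omega> \<noteq> 0" using w3 by auto

lemma w2c:
  assumes "a + c = 0" "of_nat D * c = 0" "a + c * \<omega>^D = 0" "c \<noteq> 0" "0 < D" "D < 3*p"
  shows False
proof -
  have "of_nat D = (0::'a)" using assms(2,4) by simp
  then have pD: "p dvd D" using of_nat_0_iff by simp
  have "c * (\<omega>^D - 1) = (a + c * \<omega>^D) - (a + c)" by (simp add: algebra_simps)
  then have "c * (\<omega>^D - 1) = 0" using assms(1,3) by simp
  then have "\<omega>^D = 1" using assms(4) by simp
  then have tD: "3 dvd D" using wpow1 by simp
  obtain m where m: "D = p * m" using pD by blast
  have n3: "\<not> 3 dvd p" using pr p3 by (metis prime_nat_iff numeral_eq_one_iff semiring_norm(86))
  have "3 dvd m" using tD m n3 prime_dvd_mult_iff[of "3::nat" p m] by simp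
  then obtain k where k: "m = 3 * k" by blast
  then have "k \<ge> 1" using m assms(5) by (cases k) auto
  then have "D \<ge> 3 * p" using m k by simp
  then show False using assms(6) by simp
qed


lemma lemA:
  assumes e0: "a + b + c = 0" and e1: "of_nat j * b + of_nat D * c = 0"
    and e2: "of_nat (j-1) * (of_nat j * b) + of_nat (D-1) * (of_nat D * c) = 0"
    and ew: "a + b * \<omega>^j + c * \<omega>^D = 0"
    and a0: "a \<noteq> 0" and c0: "c \<noteq> 0" and j: "j = 1 \<or> j = D - 1" and D: "4 \<le> D" "D < 3*p"
  shows False
proof -
  define d where "d = (of_nat D :: 'a)"
  have dm1: "of_nat (D-1) = d - 1" unfolding d_def using D by (simp add: of_nat_diff)
  have dm2: "of_nat (D-1-1) = d - 2" unfolding d_def using D by (simp add: of_nat_diff)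
  from j show False
  proof
    assume j1: "j = 1"
    have e1': "b + d * c = 0" using e1 j1 d_def by simp
    have "of_nat (D-1) * (of_nat D * c) = (0::'a)" using e2 j1 by simp
    then have "(d - 1) * (d * c) = 0" using dm1 d_def by metis
    then have "d = 0 \<or> d - 1 = 0" using c0 by auto
    then show False
    proof
      assume "d = 0"
      then have "b = 0" using e1' by simp
      then show False using w2c[of a c D] e0 e1 ew c0 D j1 d_def \<open>d = 0\<close> by simp
    next
      assume "d - 1 = 0"
      then have "b = - c" using e1' by (simp add: algebra_simps eq_neg_iff_add_eq_0)
      then show False using e0 a0 by simp
    qed
  next
    assume jD: "j = D - 1"
    have e1': "(d - 1) * b + d * c = 0" using e1 jD dm1 d_def by simp
    have e2': "(d - 2) * ((d - 1) * b) + (d - 1) * (d * c) = 0" using e2 jD dm1 dm2 d_def by simp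
    have "d * c = ((d - 2) * ((d - 1) * b) + (d - 1) * (d * c)) - (d - 2) * ((d - 1) * b + d * c)"
      by (simp add: algebra_simps)
    then have dc: "d * c = 0" using e1' e2' by simp
    then have d0: "d = 0" using c0 by simp
    then have "b = 0" using e1' by simp
    then show False using w2c[of a c D] e0 ew c0 D dc d_def by simp
  qed
qed

lemma lemB:
  assumes e0: "a + b + c = 0" and e1: "of_nat j * b + of_nat D * c = 0"
    and ew: "a + b * \<omega>^j + c * \<omega>^D = 0"
    and ew1: "of_nat j * b * \<omega>^(j-1) + of_nat D * c * \<omega>^(D-1) = 0"
    and a0: "a \<noteq> 0" and c0: "c \<noteq> 0" and j: "j = 1 \<or> j = D - 1" and D: "4 \<le> D" "D < 3*p"
  shows False
proof -
  define d where "d = (of_nat D :: 'a)"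
  have dm1: "of_nat (D-1) = d - 1" unfolding d_def using D by (simp add: of_nat_diff)
  from j show False
  proof
    assume j1: "j = 1"
    have e1': "b + d * c = 0" using e1 j1 d_def by simp
    have ew1': "b + d * c * \<omega>^(D-1) = 0" using ew1 j1 d_def by simp
    show False
    proof (cases "b = 0")
      case True
      then have "d * c = 0" using e1' by simp
      then show False using w2c[of a c D] e0 ew c0 D True d_def by simp
    next
      case False
      have "d * c * (\<omega>^(D-1) - 1) = (b + d * c * \<omega>^(D-1)) - (b + d * c)" by (simp add: algebra_simps)
      then have "d * c * (\<omega>^(D-1) - 1) = 0" using e1' ew1' by simp
      moreover have "d * c \<noteq> 0" using e1' False by (metis add.right_neutral)
      ultimately have "\<omega>^(D-1) = 1" by simp
      moreover have "D = Suc (D - 1)" using D by simp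
      then have "\<omega>^D = \<omega>^(D-1) * \<omega>" by (metis power_Suc2)
      ultimately have "\<omega>^D = \<omega>" by simp
      then have "a + b * \<omega> + c * \<omega> = 0" using ew j1 by simp
      moreover have "(b + c) * (\<omega> - 1) = (a + b * \<omega> + c * \<omega>) - (a + b + c)" by (simp add: algebra_simps)
      ultimately have "(b + c) * (\<omega> - 1) = 0" using e0 by simp
      then have "b + c = 0" using w1 by simp
      then show False using e0 a0 by (simp add: add.assoc)
    qed
  next
    assume jD: "j = D - 1"
    have e1': "(d - 1) * b + d * c = 0" using e1 jD dm1 d_def by simp
    have "D - 1 = Suc (D - 1 - 1)" using D by simp
    then have pw1: "\<omega>^(D-1) = \<omega>^(D-1-1) * \<omega>" by (metis power_Suc2)
    define u where "u = \<omega>^(D-1-1)"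
    have "of_nat j * b * \<omega>^(j-1) + of_nat D * c * \<omega>^(D-1) = (d-1) * b * u + d * c * (u * \<omega>)"
      unfolding jD dm1 pw1 d_def[symmetric] u_def ..
    also have "\<dots> = \<omega>^(D-1-1) * ((d - 1) * b + d * c * \<omega>)" unfolding u_def by (simp add: algebra_simps)
    finally have "\<omega>^(D-1-1) * ((d - 1) * b + d * c * \<omega>) = 0" using ew1 by simp
    then have e2': "(d - 1) * b + d * c * \<omega> = 0" using w0 by simp
    have "d * c * (\<omega> - 1) = ((d - 1) * b + d * c * \<omega>) - ((d - 1) * b + d * c)" by (simp add: algebra_simps)
    then have "d * c * (\<omega> - 1) = 0" using e1' e2' by simp
    then have dc: "d * c = 0" using w1 by simp
    then have d0: "d = 0" using c0 by simp
    then have "b = 0" using e1' by simp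
    then show False using w2c[of a c D] e0 ew c0 D dc d_def by simp
  qed
qed

lemma sig: "1 + \<omega>^m + (\<omega>^2)^m = (if 3 dvd m then 3 else 0)"
proof -
  have e: "(\<omega>^2)^m = (\<omega>^m)^2" by (simp add: power_mult[symmetric] mult.commute)
  have w4: "\<omega>^4 = \<omega>" using wpow[of 4] by simp
  have "m mod 3 = 0 \<or> m mod 3 = 1 \<or> m mod 3 = 2" by auto
  then show ?thesis
  proof (elim disjE)
    assume "m mod 3 = 0" then show ?thesis using wpow[of m] e by (simp add: dvd_eq_mod_eq_0)
  next
    assume h: "m mod 3 = 1"
    then have "\<omega>^m = \<omega>" using wpow[of m] by simp
    then show ?thesis using e h wsum by (simp add: dvd_eq_mod_eq_0)
  next
    assume h: "m mod 3 = 2"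
    then have "\<omega>^m = \<omega>^2" using wpow[of m] by simp
    then have "1 + \<omega>^m + (\<omega>^2)^m = 1 + \<omega>^2 + \<omega>^4" using e by (simp add: power_mult[symmetric])
    also have "\<dots> = 0" using w4 wsum by (simp add: algebra_simps)
    finally show ?thesis using h by (simp add: dvd_eq_mod_eq_0)
  qed
qed

lemma lemC:
  assumes e0: "a + b + c = 0" and e1: "of_nat j * b + of_nat D * c = 0"
    and ew: "a + b * \<omega>^j + c * \<omega>^D = 0"
    and ew2: "a + b * (\<omega>^2)^j + c * (\<omega>^2)^D = 0"
    and a0: "a \<noteq> 0" and c0: "c \<noteq> 0" and j: "j = 1 \<or> j = D - 1" and D: "4 \<le> D" "D < 3*p"
  shows False
proof -
  have sum: "3 * a + b * (1 + \<omega>^j + (\<omega>^2)^j) + c * (1 + \<omega>^D + (\<omega>^2)^D) = 0"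
  proof -
    have "3 * a + b * (1 + \<omega>^j + (\<omega>^2)^j) + c * (1 + \<omega>^D + (\<omega>^2)^D)
       = (a + b + c) + (a + b * \<omega>^j + c * \<omega>^D) + (a + b * (\<omega>^2)^j + c * (\<omega>^2)^D)"
      by (simp add: algebra_simps)
    then show ?thesis using e0 ew ew2 by simp
  qed
  have b0: "b \<noteq> 0"
  proof
    assume b: "b = 0"
    have "of_nat D * c = 0" using e1 b by simp
    then show False using w2c[of a c D] e0 ew c0 D b by simp
  qed
  from j show False
  proof
    assume j1: "j = 1"
    have s1: "1 + \<omega>^j + (\<omega>^2)^j = 0" using sig[of 1] j1 by simp
    show False
    proof (cases "3 dvd D")
      case True
      then have "\<omega>^D = 1" using wpow1 by simp
      then have "a + b * \<omega> + c = 0" using ew j1 by simp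
      moreover have "b * (\<omega> - 1) = (a + b * \<omega> + c) - (a + b + c)" by (simp add: algebra_simps)
      ultimately have "b * (\<omega> - 1) = 0" using e0 by simp
      then show False using b0 w1 by simp
    next
      case False
      then have "3 * a = 0" using sum s1 sig[of D] by simp
      then show False using a0 three by simp
    qed
  next
    assume jD: "j = D - 1"
    show False
    proof (cases "3 dvd D")
      case True
      then have "\<omega>^D = 1" using wpow1 by simp
      moreover have "\<omega>^(D-1) \<noteq> 1"
      proof
        assume "\<omega>^(D-1) = 1"
        then have "3 dvd D - 1" using wpow1 by simp
        with True have "3 dvd D - (D - 1)" by (rule dvd_diff_nat)
        moreover have "D - (D - 1) = 1" using D by simp
        ultimately show False by simp
      qed
      moreover have "b * (\<omega>^(D-1) - 1) = (a + b * \<omega>^(D-1) + c * \<omega>^D) - (a + b + c) + c * (1 - \<omega>^D)"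
        by (simp add: algebra_simps)
      ultimately have "b * (\<omega>^(D-1) - 1) = 0" using ew e0 jD by simp
      then show False using b0 \<open>\<omega>^(D-1) \<noteq> 1\<close> by simp
    next
      case False
      show False
      proof (cases "3 dvd (D - 1)")
        case True
        from sum have "3*a + b*(if 3 dvd (D-1) then 3 else 0) + c*(if 3 dvd D then 3 else 0) = 0"
          by (simp only: jD sig)
        then have h3: "3 * a + 3 * b = 0" using True False by (simp add: algebra_simps)
        have "3 * (a + b) = 3 * a + 3 * b" by (rule distrib_left)
        then have "3 * (a + b) = 0" using h3 by simp
        then have "a + b = 0" using three by (metis mult_eq_0_iff)
        then show False using e0 c0 by simp
      next
        case False2: False
        from sum have "3*a + b*(if 3 dvd (D-1) then 3 else 0) + c*(if 3 dvd D then 3 else 0) = 0"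
          by (simp only: jD sig)
        then have "3 * a = 0" using False2 False by simp
        then show False using a0 three by simp
      qed
    qed
  qed
qed
end


lemma lower:
  fixes g :: "'b::field poly"
  assumes gd: "g dvd xn_minus_1 n" and n: "n > 0" and c: "c \<in> cyclic_code n g" "c \<noteq> 0"
    and dn: "d \<le> n"
    and Q: "\<And>R. R \<in> cyclic_code n g \<Longrightarrow> coeff R 0 \<noteq> 0 \<Longrightarrow> coeff R (n-1) = 0 \<Longrightarrow> d \<le> pw n R"
  shows "d \<le> pw n c"
proof (cases "\<forall>u<n. coeff c u \<noteq> 0")
  case True
  then have "{i. i < n \<and> (coeff c i \<noteq> 0 \<or> coeff c ((i + 1) mod n) \<noteq> 0)} = {..<n}" by auto
  then have "pw n c = n" unfolding pw_def by simp
  then show ?thesis using dn by simp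
next
  case False
  then obtain u where u: "u < n" "coeff c u = 0" by blast
  have hz: "\<forall>i\<ge>n. coeff c i = 0" using c code_iff[OF gd n] by auto
  obtain t where t: "t < n" "coeff c t \<noteq> 0" "coeff c ((n - 1 + t) mod n) = 0"
    using start[OF c(2) hz u] by blast
  obtain R where R: "R \<in> cyclic_code n g" "\<forall>i<n. coeff R i = coeff c ((i + t) mod n)"
    using rot[OF gd n c(1), of t] t by auto
  have "coeff R 0 \<noteq> 0" using R(2) n t by auto
  moreover have "coeff R (n-1) = 0" using R(2) n t by (simp add: add.commute)
  ultimately have "d \<le> pw n R" using Q R(1) by blast
  also have "\<dots> \<le> pw n c" by (rule pw_rot_le[OF R(2) n])
  finally show ?thesis .
qed

lemma pw_upper2:
  assumes "\<forall>i<n. coeff w i \<noteq> 0 \<longrightarrow> i \<in> A" "n > 0" "finite A"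
  shows "pw n w \<le> 2 * card A"
proof -
  have "pw n w \<le> card (A \<union> (\<lambda>a. (a + n - 1) mod n) ` A)" by (rule pw_upper[OF assms])
  also have "\<dots> \<le> card A + card ((\<lambda>a. (a + n - 1) mod n) ` A)" by (rule card_Un_le)
  also have "\<dots> \<le> card A + card A" using card_image_le[OF assms(3)] by simp
  finally show ?thesis by simp
qed

lemma rep3:
  fixes R :: "'b::comm_monoid_add poly"
  assumes "0 < j" "j < D" "\<And>i. i \<noteq> 0 \<Longrightarrow> i \<noteq> j \<Longrightarrow> i \<noteq> D \<Longrightarrow> coeff R i = 0"
  shows "R = monom (coeff R 0) 0 + monom (coeff R j) j + monom (coeff R D) D"
  by (rule poly_eqI) (use assms in \<open>auto simp: coeff_monom\<close>)

context cc begin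

lemma p5: "p \<ge> 5"
proof -
  have "p \<ge> 2" using pr by (simp add: prime_ge_2_nat)
  moreover have "p \<noteq> 2" "p \<noteq> 4" using od by auto
  ultimately show ?thesis using p3 by linarith
qed

lemma gen_ne0: "gen3 \<omega> r1 r2 r3 \<noteq> 0"
  unfolding gen3_def by simp

lemma deg_gen: "degree (gen3 \<omega> r1 r2 r3) = r1 + r2 + r3"
  unfolding gen3_def by (simp add: degree_mult_eq degree_linear_power)

lemma f1: "k \<le> r1 \<Longrightarrow> [:-1,1:]^k dvd gen3 \<omega> r1 r2 r3"
  unfolding gen3_def by (intro dvd_mult2 le_imp_power_dvd)
lemma f2: "k \<le> r2 \<Longrightarrow> [:-\<omega>,1:]^k dvd gen3 \<omega> r1 r2 r3"
  unfolding gen3_def by (intro dvd_mult2 dvd_mult le_imp_power_dvd)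
lemma f3: "k \<le> r3 \<Longrightarrow> [:-(\<omega>^2),1:]^k dvd gen3 \<omega> r1 r2 r3"
  unfolding gen3_def by (intro dvd_mult le_imp_power_dvd)


lemma n2: "3 * p \<ge> 2" using p5 by simp

lemma Q4:
  assumes gd: "g dvd xn_minus_1 (3*p)" and dg: "2 \<le> degree g"
    and R: "R \<in> cyclic_code (3*p) g" "coeff R 0 \<noteq> 0" "coeff R (3*p-1) = 0"
  shows "4 \<le> pw (3*p) R"
proof -
  have np: "3 * p > 0" using p5 by simp
  have hz: "\<forall>i\<ge>3*p. coeff R i = 0" "g dvd R" using R(1) code_iff[OF gd np] by auto
  have "R \<noteq> 0" using R(2) by auto
  then have "degree g \<le> degree R" using hz(2) by (rule dvd_imp_degree_le[rotated])
  then show ?thesis using core_a[OF hz(1) R(2) R(3) n2] dg by simp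
qed

lemma Q5:
  assumes gd: "g dvd xn_minus_1 (3*p)" and dg: "3 \<le> degree g"
    and g1: "[:-1,1:]^2 dvd g" and g2: "[:-\<omega>,1:] dvd g"
    and R: "R \<in> cyclic_code (3*p) g" "coeff R 0 \<noteq> 0" "coeff R (3*p-1) = 0"
  shows "5 \<le> pw (3*p) R"
proof (rule ccontr)
  assume "\<not> 5 \<le> pw (3*p) R"
  then have pw4: "pw (3*p) R \<le> 4" by simp
  have np: "3 * p > 0" using p5 by simp
  have hz: "\<forall>i\<ge>3*p. coeff R i = 0" "g dvd R" using R(1) code_iff[OF gd np] by auto
  have R0: "R \<noteq> 0" using R(2) by auto
  define D where "D = degree R"
  have "degree g \<le> D" unfolding D_def using hz(2) R0 by (rule dvd_imp_degree_le)
  then have D3: "3 \<le> D" using dg by simp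
  have Dn: "D < 3 * p" using core_deg[OF hz(1) R(2) R(3) n2] D_def by simp
  define a where "a = coeff R 0"
  define c where "c = coeff R D"
  have c0: "c \<noteq> 0" unfolding c_def D_def using R0 by simp
  define b where "b = coeff R 1"
  have b0: "b = 0" using core_b[OF hz(1) R(2) R(3) n2, of 1] D3 pw4 D_def b_def by simp
  have Rrep: "R = monom a 0 + monom b 1 + monom c D"
    unfolding a_def b_def c_def
  proof (rule rep3)
    fix i assume "i \<noteq> 0" "i \<noteq> 1" "i \<noteq> D"
    then show "coeff R i = 0"
      using core_b[OF hz(1) R(2) R(3) n2, of i] D3 pw4 D_def hz(1) Dn
      by (cases "i < D") (auto simp: D_def coeff_eq_0)
  qed (use D3 in auto)
  have "[:-1,1:]^2 dvd R" using g1 hz(2) by (rule dvd_trans)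
  then have e: "poly R 1 = 0" "poly (pderiv R) 1 = 0" using d2[of 1 R] by auto
  have "[:-\<omega>,1:] dvd R" using g2 hz(2) by (rule dvd_trans)
  then have ew: "poly R \<omega> = 0" by (simp add: poly_eq_0_iff_dvd)
  have E0: "a + c = 0" using e(1) b0 unfolding Rrep ev3 by simp
  have E1: "of_nat D * c = 0" using e(2) b0 unfolding Rrep ev3 by simp
  have EW: "a + c * \<omega>^D = 0" using ew b0 unfolding Rrep ev3 by simp
  show False using w2c[OF E0 E1 EW c0] D3 Dn by simp
qed


lemma Q6:
  assumes gd: "g dvd xn_minus_1 (3*p)" and dg: "4 \<le> degree g"
    and cs: "([:-1,1:]^3 dvd g \<and> [:-\<omega>,1:] dvd g) \<or> ([:-1,1:]^2 dvd g \<and> [:-\<omega>,1:]^2 dvd g)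
       \<or> ([:-1,1:]^2 dvd g \<and> [:-\<omega>,1:] dvd g \<and> [:-(\<omega>^2),1:] dvd g)"
    and R: "R \<in> cyclic_code (3*p) g" "coeff R 0 \<noteq> 0" "coeff R (3*p-1) = 0"
  shows "6 \<le> pw (3*p) R"
proof (rule ccontr)
  assume "\<not> 6 \<le> pw (3*p) R"
  then have pw5: "pw (3*p) R \<le> 5" by simp
  have np: "3 * p > 0" using p5 by simp
  have hz: "\<forall>i\<ge>3*p. coeff R i = 0" "g dvd R" using R(1) code_iff[OF gd np] by auto
  have R0: "R \<noteq> 0" using R(2) by auto
  define D where "D = degree R"
  have "degree g \<le> D" unfolding D_def using hz(2) R0 by (rule dvd_imp_degree_le)
  then have D4: "4 \<le> D" using dg by simp
  have Dn: "D < 3 * p" using core_deg[OF hz(1) R(2) R(3) n2] D_def by simp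
  define a where "a = coeff R 0"
  define c where "c = coeff R D"
  have a0: "a \<noteq> 0" using R(2) a_def by simp
  have c0: "c \<noteq> 0" unfolding c_def D_def using R0 by simp
  have mid: "coeff R s = 0" if "1 < s" "s < D - 1" for s
    using core_c1[OF hz(1) R(2) R(3) n2, of s] D4 pw5 that D_def by simp
  have hi: "coeff R s = 0" if "D < s" for s
    using that D_def by (simp add: coeff_eq_0)
  obtain j where j: "j = 1 \<or> j = D - 1" and jz: "\<And>i. i \<noteq> 0 \<Longrightarrow> i \<noteq> j \<Longrightarrow> i \<noteq> D \<Longrightarrow> coeff R i = 0"
  proof (cases "coeff R 1 = 0")
    case True
    show ?thesis
    proof (rule that[of "D - 1"])
      fix i assume "i \<noteq> 0" "i \<noteq> D - 1" "i \<noteq> D"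
      then have "i = 1 \<or> (1 < i \<and> i < D - 1) \<or> D < i" using D4 by linarith
      then show "coeff R i = 0" using True mid hi by blast
    qed simp
  next
    case False
    then have z: "coeff R (D - 1) = 0" using core_c2[OF hz(1) R(2) R(3) n2] D4 pw5 D_def by auto
    show ?thesis
    proof (rule that[of 1])
      fix i assume "i \<noteq> 0" "i \<noteq> 1" "i \<noteq> D"
      then have "i = D - 1 \<or> (1 < i \<and> i < D - 1) \<or> D < i" using D4 by linarith
      then show "coeff R i = 0" using z mid hi by blast
    qed simp
  qed
  define b where "b = coeff R j"
  have Rrep: "R = monom a 0 + monom b j + monom c D"
    unfolding a_def b_def c_def by (rule rep3) (use j D4 jz in auto)
  have Dp: "D < 3 * p" by (rule Dn)
  from cs show False
  proof (elim disjE conjE)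
    assume g1: "[:-1,1:]^3 dvd g" and g2: "[:-\<omega>,1:] dvd g"
    have h1: "[:-1,1:]^3 dvd R" using g1 hz(2) by (rule dvd_trans)
    then have "[:-1,1:]^2 dvd R" by (rule power_le_dvd) simp
    then have e: "poly R 1 = 0" "poly (pderiv R) 1 = 0" using d2[of 1 R] by auto
    have e2: "poly (pderiv (pderiv R)) 1 = 0" using d3[OF h1] .
    have "[:-\<omega>,1:] dvd R" using g2 hz(2) by (rule dvd_trans)
    then have ew: "poly R \<omega> = 0" by (simp add: poly_eq_0_iff_dvd)
    have E0: "a + b + c = 0" using e(1) unfolding Rrep ev3 by simp
    have E1: "of_nat j * b + of_nat D * c = 0" using e(2) unfolding Rrep ev3 by simp
    have E2: "of_nat (j-1) * (of_nat j * b) + of_nat (D-1) * (of_nat D * c) = 0" using e2 unfolding Rrep ev3 by simp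
    have EW: "a + b * \<omega>^j + c * \<omega>^D = 0" using ew unfolding Rrep ev3 by simp
    show False by (rule lemA[OF E0 E1 E2 EW a0 c0 j D4 Dp])
  next
    assume g1: "[:-1,1:]^2 dvd g" and g2: "[:-\<omega>,1:]^2 dvd g"
    have "[:-1,1:]^2 dvd R" using g1 hz(2) by (rule dvd_trans)
    then have e: "poly R 1 = 0" "poly (pderiv R) 1 = 0" using d2[of 1 R] by auto
    have "[:-\<omega>,1:]^2 dvd R" using g2 hz(2) by (rule dvd_trans)
    then have ew: "poly R \<omega> = 0" "poly (pderiv R) \<omega> = 0" using d2[of \<omega> R] by auto
    have E0: "a + b + c = 0" using e(1) unfolding Rrep ev3 by simp
    have E1: "of_nat j * b + of_nat D * c = 0" using e(2) unfolding Rrep ev3 by simp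
    have EW: "a + b * \<omega>^j + c * \<omega>^D = 0" using ew(1) unfolding Rrep ev3 by simp
    have EW1: "of_nat j * b * \<omega>^(j-1) + of_nat D * c * \<omega>^(D-1) = 0" using ew(2) unfolding Rrep ev3 by simp
    show False by (rule lemB[OF E0 E1 EW EW1 a0 c0 j D4 Dp])
  next
    assume g1: "[:-1,1:]^2 dvd g" and g2: "[:-\<omega>,1:] dvd g" and g3: "[:-(\<omega>^2),1:] dvd g"
    have "[:-1,1:]^2 dvd R" using g1 hz(2) by (rule dvd_trans)
    then have e: "poly R 1 = 0" "poly (pderiv R) 1 = 0" using d2[of 1 R] by auto
    have "[:-\<omega>,1:] dvd R" using g2 hz(2) by (rule dvd_trans)
    then have ew: "poly R \<omega> = 0" by (simp add: poly_eq_0_iff_dvd)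
    have "[:-(\<omega>^2),1:] dvd R" using g3 hz(2) by (rule dvd_trans)
    then have ew2: "poly R (\<omega>^2) = 0" by (simp add: poly_eq_0_iff_dvd)
    have E0: "a + b + c = 0" using e(1) unfolding Rrep ev3 by simp
    have E1: "of_nat j * b + of_nat D * c = 0" using e(2) unfolding Rrep ev3 by simp
    have EW: "a + b * \<omega>^j + c * \<omega>^D = 0" using ew unfolding Rrep ev3 by simp
    have EW2: "a + b * (\<omega>^2)^j + c * (\<omega>^2)^D = 0" using ew2 unfolding Rrep ev3 by simp
    show False by (rule lemC[OF E0 E1 EW EW2 a0 c0 j D4 Dp])
  qed
qed


lemma fin_min:
  assumes gd: "g dvd xn_minus_1 (3*p)" and w: "w \<in> cyclic_code (3*p) g" "w \<noteq> 0" "pw (3*p) w \<le> d"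
    and dn: "d \<le> 3*p"
    and Q: "\<And>R. R \<in> cyclic_code (3*p) g \<Longrightarrow> coeff R 0 \<noteq> 0 \<Longrightarrow> coeff R (3*p-1) = 0 \<Longrightarrow> d \<le> pw (3*p) R"
  shows "min_pair_dist (3*p) (cyclic_code (3*p) g) = d"
proof -
  have np: "3 * p > 0" using p5 by simp
  have lb: "d \<le> pw (3*p) c" if "c \<in> cyclic_code (3*p) g" "c \<noteq> 0" for c
    by (rule lower[OF gd np that dn Q])
  have "pw (3*p) w = d" using lb[OF w(1,2)] w(3) by simp
  show ?thesis
    by (rule min_lemma[OF _ w(1,2) \<open>pw (3*p) w = d\<close> code_0[OF gd np] lb])
       (rule code_sub[OF gd np])
qed

lemma card2: "card {a, b} \<le> 2"
  using card_length[of "[a, b]"] by simp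
lemma card3: "card {a, b, c} \<le> 3"
  using card_length[of "[a, b, c]"] by simp

lemma part1:
  assumes r: "2 \<le> r2" "r2 \<le> p - 1"
  shows "min_pair_dist (3*p) (cyclic_code (3*p) (gen3 \<omega> 0 r2 0)) = 4"
proof -
  let ?g = "gen3 \<omega> 0 r2 0"
  have np: "3 * p > 0" using p5 by simp
  have gd: "?g dvd xn_minus_1 (3*p)" using r by (intro gen_dvd) auto
  define w where "w = [:-\<omega>,1:]^p"
  have wf: "w = monom 1 p - [:\<omega>^p:]" unfolding w_def by (rule lin_frob)
  have cw: "coeff w i = (if p = i then 1 else 0) - (if i = 0 then \<omega>^p else 0)" for i
    unfolding wf by (cases i) (simp_all add: coeff_monom)
  have "?g = [:-\<omega>,1:]^r2" unfolding gen3_def by simp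
  then have "?g dvd w" unfolding w_def using r by (simp add: le_imp_power_dvd)
  moreover have "\<forall>i\<ge>3*p. coeff w i = 0" using cw p5 by auto
  ultimately have wc: "w \<in> cyclic_code (3*p) ?g" using code_iff[OF gd np] by auto
  have w0: "w \<noteq> 0" unfolding w_def by simp
  have "pw (3*p) w \<le> 2 * card {0, p}"
    by (rule pw_upper2) (use cw np in auto)
  also have "\<dots> \<le> 4" using card2[of 0 p] by simp
  finally have pw: "pw (3*p) w \<le> 4" .
  show ?thesis
  proof (rule fin_min[OF gd wc w0 pw])
    show "4 \<le> 3 * p" using p5 by simp
    fix R assume "R \<in> cyclic_code (3*p) ?g" "coeff R 0 \<noteq> 0" "coeff R (3*p-1) = 0"
    then show "4 \<le> pw (3*p) R" using Q4[OF gd] deg_gen[of 0 r2 0] r by simp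
  qed
qed


lemma predmod: "1 \<le> a \<Longrightarrow> a \<le> n \<Longrightarrow> (a + n - 1) mod n = (a - 1 :: nat)"
proof -
  assume a: "1 \<le> a" "a \<le> n"
  then have "a + n - 1 = (a - 1) + n" by simp
  moreover have "((a - 1) + n) mod n = (a - 1) mod n" by simp
  moreover have "(a - 1) mod n = a - 1" using a by simp
  ultimately show ?thesis by simp
qed

lemma part2: "min_pair_dist (3*p) (cyclic_code (3*p) (gen3 \<omega> 2 1 0)) = 5"
proof -
  let ?g = "gen3 \<omega> 2 1 0"
  let ?n = "3 * p"
  have np: "3 * p > 0" using p5 by simp
  have gd: "?g dvd xn_minus_1 (3*p)" using p5 by (intro gen_dvd) auto
  have dg: "degree ?g = 3" using deg_gen[of 2 1 0] by simp
  have hz: "\<forall>i\<ge>3*p. coeff ?g i = 0" using dg p5 by (auto intro: coeff_eq_0)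
  have wc: "?g \<in> cyclic_code (3*p) ?g" using code_iff[OF gd np] hz by auto
  have sup: "\<forall>i<3*p. coeff ?g i \<noteq> 0 \<longrightarrow> i \<in> {0,1,2,3}"
    using dg by (auto dest!: le_degree)
  have "pw (3*p) ?g \<le> card ({0,1,2,3} \<union> (\<lambda>a. (a + ?n - 1) mod ?n) ` {0,1,2,3})"
    by (rule pw_upper[OF sup np]) simp
  also have "\<dots> \<le> card (set [0,1,2,3,?n - 1])"
  proof (rule card_mono)
    have "(1 + ?n - 1) mod ?n = 0" "(2 + ?n - 1) mod ?n = 1" "(3 + ?n - 1) mod ?n = 2"
      using predmod[of 1 ?n] predmod[of 2 ?n] predmod[of 3 ?n] p5 by simp_all
    moreover have "(0 + ?n - 1) mod ?n = ?n - 1" using p5 by simp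
    ultimately show "{0,1,2,3} \<union> (\<lambda>a. (a + ?n - 1) mod ?n) ` {0,1,2,3} \<subseteq> set [0,1,2,3,?n - 1]"
      by auto
  qed simp
  also have "\<dots> \<le> 5" using card_length[of "[0,1,2,3,?n - 1]"] by simp
  finally have pw: "pw (3*p) ?g \<le> 5" .
  show ?thesis
  proof (rule fin_min[OF gd wc gen_ne0 pw])
    show "5 \<le> 3 * p" using p5 by simp
    fix R assume R: "R \<in> cyclic_code (3*p) ?g" "coeff R 0 \<noteq> 0" "coeff R (3*p-1) = 0"
    have g2: "[:-\<omega>,1:] dvd ?g" using f2[of 1 1 2 0] by simp
    show "5 \<le> pw (3*p) R" by (rule Q5[OF gd _ f1[of 2 2 1 0] g2 R]) (use dg in simp_all)
  qed
qed

lemma part3: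
  assumes r: "r1 \<le> p - 1" "r2 \<le> r1" "1 \<le> r2" "4 \<le> r1 + r2"
  shows "min_pair_dist (3*p) (cyclic_code (3*p) (gen3 \<omega> r1 r2 0)) = 6"
proof -
  let ?g = "gen3 \<omega> r1 r2 0"
  have np: "3 * p > 0" using p5 by simp
  have gd: "?g dvd xn_minus_1 (3*p)" using r by (intro gen_dvd) auto
  define w where "w = [:-1,1:]^p * [:-\<omega>,1:]^p"
  define c where "c = \<omega>^p"
  have "w = (monom 1 p - [:1^p:]) * (monom 1 p - [:\<omega>^p:])" unfolding w_def lin_frob ..
  also have "\<dots> = monom 1 p * monom 1 p - monom c 0 * monom 1 p - monom 1 p + monom c 0"
    by (simp add: algebra_simps c_def monom_0)
  also have "\<dots> = monom 1 (p + p) - monom c p - monom 1 p + monom c 0"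
    by (simp add: mult_monom)
  finally have wf: "w = monom 1 (p + p) - monom c p - monom 1 p + monom c 0" .
  have cw: "coeff w i = (if p + p = i then 1 else 0) - (if p = i then c else 0) - (if p = i then 1 else 0)
     + (if 0 = i then c else 0)" for i
    unfolding wf by (simp add: coeff_monom)
  have "?g = [:-1,1:]^r1 * [:-\<omega>,1:]^r2" unfolding gen3_def by simp
  then have "?g dvd w" unfolding w_def using r by (simp add: le_imp_power_dvd mult_dvd_mono)
  moreover have "\<forall>i\<ge>3*p. coeff w i = 0" using cw p5 by auto
  ultimately have wc: "w \<in> cyclic_code (3*p) ?g" using code_iff[OF gd np] by auto
  have "coeff w (p + p) = 1" using cw p5 by simp
  then have w0: "w \<noteq> 0" by auto
  have "pw (3*p) w \<le> 2 * card {0, p, p + p}"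
    by (rule pw_upper2) (use cw np in auto)
  also have "\<dots> \<le> 6" using card3[of 0 p "p + p"] by simp
  finally have pw: "pw (3*p) w \<le> 6" .
  show ?thesis
  proof (rule fin_min[OF gd wc w0 pw])
    show "6 \<le> 3 * p" using p5 by simp
    fix R assume R: "R \<in> cyclic_code (3*p) ?g" "coeff R 0 \<noteq> 0" "coeff R (3*p-1) = 0"
    have dg: "4 \<le> degree ?g" using deg_gen[of r1 r2 0] r by simp
    have cs: "([:-1,1:]^3 dvd ?g \<and> [:-\<omega>,1:] dvd ?g) \<or> ([:-1,1:]^2 dvd ?g \<and> [:-\<omega>,1:]^2 dvd ?g)
       \<or> ([:-1,1:]^2 dvd ?g \<and> [:-\<omega>,1:] dvd ?g \<and> [:-(\<omega>^2),1:] dvd ?g)"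
    proof (cases "3 \<le> r1")
      case True
      then show ?thesis using f1[of 3 r1 r2 0] f2[of 1 r2 r1 0] r by simp
    next
      case False
      then have "r1 = 2" "r2 = 2" using r by auto
      then show ?thesis using f1[of 2 r1 r2 0] f2[of 2 r2 r1 0] by simp
    qed
    show "6 \<le> pw (3*p) R" by (rule Q6[OF gd dg cs R])
  qed
qed

lemma part4:
  assumes r: "r2 \<le> 2" "r3 \<le> r2" "2 \<le> r2 + r3" "r2 + r3 \<le> 4"
  shows "min_pair_dist (3*p) (cyclic_code (3*p) (gen3 \<omega> 2 r2 r3)) = 6"
proof -
  let ?g = "gen3 \<omega> 2 r2 r3"
  have np: "3 * p > 0" using p5 by simp
  have gd: "?g dvd xn_minus_1 (3*p)" using r p5 by (intro gen_dvd) auto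
  define w where "w = (monom 1 3 - 1 :: 'a poly)^2"
  have "w = monom 1 3 * monom 1 3 - (monom 1 3 + monom 1 3) + monom 1 0"
    unfolding w_def by (simp add: power2_eq_square algebra_simps monom_0)
  also have "\<dots> = monom 1 6 - monom 2 3 + monom 1 0"
    by (simp add: mult_monom add_monom)
  finally have wf: "w = monom 1 6 - monom 2 3 + monom 1 0" .
  have cw: "coeff w i = (if 6 = i then 1 else 0) - (if 3 = i then 2 else 0) + (if 0 = i then 1 else 0)" for i
    unfolding wf by (simp add: coeff_monom)
  have "w = [:-1,1:]^2 * [:-\<omega>,1:]^2 * [:-(\<omega>^2),1:]^2"
    unfolding w_def cube[symmetric] by (simp only: power_mult_distrib)
  then have "?g dvd w" unfolding gen3_def using r by (simp add: le_imp_power_dvd mult_dvd_mono)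
  moreover have "\<forall>i\<ge>3*p. coeff w i = 0" using cw p5 by auto
  ultimately have wc: "w \<in> cyclic_code (3*p) ?g" using code_iff[OF gd np] by auto
  have "coeff w 6 = 1" using cw by simp
  then have w0: "w \<noteq> 0" by auto
  have "pw (3*p) w \<le> 2 * card {0, 3, 6::nat}"
    by (rule pw_upper2) (use cw np in auto)
  also have "\<dots> \<le> 6" using card3[of 0 3 "6::nat"] by simp
  finally have pw: "pw (3*p) w \<le> 6" .
  show ?thesis
  proof (rule fin_min[OF gd wc w0 pw])
    show "6 \<le> 3 * p" using p5 by simp
    fix R assume R: "R \<in> cyclic_code (3*p) ?g" "coeff R 0 \<noteq> 0" "coeff R (3*p-1) = 0"
    have dg: "4 \<le> degree ?g" using deg_gen[of 2 r2 r3] r by simp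
    have cs: "([:-1,1:]^3 dvd ?g \<and> [:-\<omega>,1:] dvd ?g) \<or> ([:-1,1:]^2 dvd ?g \<and> [:-\<omega>,1:]^2 dvd ?g)
       \<or> ([:-1,1:]^2 dvd ?g \<and> [:-\<omega>,1:] dvd ?g \<and> [:-(\<omega>^2),1:] dvd ?g)"
    proof (cases "r2 = 2")
      case True
      then show ?thesis using f1[of 2 2 r2 r3] f2[of 2 r2 2 r3] by simp
    next
      case False
      then have "r2 = 1" "r3 = 1" using r by auto
      then show ?thesis using f1[of 2 2 r2 r3] f2[of 1 r2 2 r3] f3[of 1 r3 2 r2] by simp
    qed
    show "6 \<le> pw (3*p) R" by (rule Q6[OF gd dg cs R])
  qed
qed

end

theorem proposition3p15:
  fixes \<omega> :: "'a::{field,finite}" and p :: nat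
  assumes "prime p" and "odd p" and "card (UNIV :: 'a set) = p"
    and "\<omega> ^ 3 = 1" and "\<omega> \<noteq> 1"
  shows "(\<forall>r2. 2 \<le> r2 \<and> r2 \<le> p - 1 \<longrightarrow>
            min_pair_dist (3*p) (cyclic_code (3*p) (gen3 \<omega> 0 r2 0)) = 4)
       \<and> min_pair_dist (3*p) (cyclic_code (3*p) (gen3 \<omega> 2 1 0)) = 5
       \<and> (\<forall>r1 r2. r1 \<le> p - 1 \<and> r2 \<le> r1 \<and> 1 \<le> r2 \<and> 4 \<le> r1 + r2 \<longrightarrow>
            min_pair_dist (3*p) (cyclic_code (3*p) (gen3 \<omega> r1 r2 0)) = 6)
       \<and> (\<forall>r2 r3. r2 \<le> 2 \<and> r3 \<le> r2 \<and> 2 \<le> r2 + r3 \<and> r2 + r3 \<le> 4 \<longrightarrow>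
            min_pair_dist (3*p) (cyclic_code (3*p) (gen3 \<omega> 2 r2 r3)) = 6)"
proof -
  interpret cc \<omega> p using assms by unfold_locales
  show ?thesis using part1 part2 part3 part4 by blast
qed

end
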